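(* Let $f_{s_1d}, f_{s_1r}, f_{rd}, g_{rd}^{s_1}, g_{s_1d}^{r}\in[0,1]$ satisfy $0\le g_{s_1d}^{r}\le f_{s_1d}$ and $0\le g_{rd}^{s_1}< f_{rd}$. Set $T_1=(1-f_{s_1d})f_{s_1r}$ and assume $T_1>0$. For $x\in[0,1]$ define $$\mu_1(x)=(1-x)(f_{s_1d}+T_1)+x\,g_{s_1d}^{r},$$ $$\mu_{u_1}^{\mathrm{SBC}}(x)=\frac{f_{rd}}{(1-x)T_1+f_{rd}-x\,g_{rd}^{s_1}}\,\mu_1(x),\qquad \mu_{u_1}^{\mathrm{DBC}}(x)=\frac{x\,f_{rd}}{(1-x)T_1+x f_{rd}-x\,g_{rd}^{s_1}}\,\mu_1(x).$$ Suppose $$f_{rd}-g_{rd}^{s_1}\le \min\left\{\frac{g_{s_1d}^{r}(T_1+f_{rd})}{T_1+f_{s_1d}},\ \frac{(T_1+g_{rd}^{s_1})^2(f_{s_1d}+T_1)}{T_1(f_{s_1d}+T_1-g_{s_1d}^{r})}-(T_1+2g_{rd}^{s_1})\right\}.$$ Then $$\max_{0\le \beta\le 1}\min\{\mu_1(\beta),\mu_{u_1}^{\mathrm{SBC}}(\beta)\}=\max_{0\le \alpha\le 1}\min\{\mu_1(\alpha),\mu_{u_1}^{\mathrm{DBC}}(\alpha)\}=\Big(1-\frac{T_1}{T_1+g_{rd}^{s_1}}\Big)(f_{s_1d}+T_1)+\frac{T_1}{T_1+g_{rd}^{s_1}}\,g_{s_1d}^{r}.$$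
   Context: This is the single-source case ($w_1=1$) of a cooperative relaying system with source $s_1$, relay $r$, destination $d$. Here $f_{mn}$ is the probability that link $(m,n)$ is not in outage (for Rayleigh fading, $f_{mn}=\exp(-(2^R-1)/(P\rho_{m,n}^2))$), and $g_{mn}^{I}$ is the probability that link $(m,n)$ is not in outage when node $I$ transmits simultaneously (so $g_{mn}^I\le f_{mn}$). The quantity $\min\{\mu_1,\mu_{u_1}^{\mathrm{SBC}}\}$ (resp. $\min\{\mu_1,\mu_{u_1}^{\mathrm{DBC}}\}$) is the maximal stable throughput of $s_1$ under the sensing-based (resp. decision-based) cooperative scheme as a function of the relay's interference probability $\beta$ (resp. $\alpha$); the theorem states the two schemes attain the same optimal maximal stable throughput under the displayed condition. *)

theory Defs
  imports Complex_Main
begin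

definition T1 :: "real \<Rightarrow> real \<Rightarrow> real" where
  "T1 fsd fsr = (1 - fsd) * fsr"

definition mu1 :: "real \<Rightarrow> real \<Rightarrow> real \<Rightarrow> real \<Rightarrow> real" where
  "mu1 fsd fsr gsd x = (1 - x) * (fsd + T1 fsd fsr) + x * gsd"

definition mu_SBC :: "real \<Rightarrow> real \<Rightarrow> real \<Rightarrow> real \<Rightarrow> real \<Rightarrow> real \<Rightarrow> real" where
  "mu_SBC fsd fsr frd grd gsd x =
     frd / ((1 - x) * T1 fsd fsr + frd - x * grd) * mu1 fsd fsr gsd x"

definition mu_DBC :: "real \<Rightarrow> real \<Rightarrow> real \<Rightarrow> real \<Rightarrow> real \<Rightarrow> real \<Rightarrow> real" where
  "mu_DBC fsd fsr frd grd gsd x =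
     x * frd / ((1 - x) * T1 fsd fsr + x * frd - x * grd) * mu1 fsd fsr gsd x"

definition is_max_on :: "(real \<Rightarrow> real) \<Rightarrow> real set \<Rightarrow> real \<Rightarrow> bool" where
  "is_max_on h S v \<longleftrightarrow> (\<exists>x\<in>S. h x = v) \<and> (\<forall>x\<in>S. h x \<le> v)"

end

theory Submission
  imports Defs
begin

theorem theorem1:
  fixes fsd fsr frd grd gsd :: real
  assumes "fsd \<in> {0..1}" "fsr \<in> {0..1}" "frd \<in> {0..1}" "grd \<in> {0..1}" "gsd \<in> {0..1}"
    and "0 \<le> gsd" "gsd \<le> fsd"
    and "0 \<le> grd" "grd < frd"
    and "T1 fsd fsr > 0"
    and "frd - grd \<le> min
           (gsd * (T1 fsd fsr + frd) / (T1 fsd fsr + fsd))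
           ((T1 fsd fsr + grd)^2 * (fsd + T1 fsd fsr)
              / (T1 fsd fsr * (fsd + T1 fsd fsr - gsd)) - (T1 fsd fsr + 2 * grd))"
  shows "is_max_on (\<lambda>b. min (mu1 fsd fsr gsd b) (mu_SBC fsd fsr frd grd gsd b)) {0..1}
           ((1 - T1 fsd fsr / (T1 fsd fsr + grd)) * (fsd + T1 fsd fsr)
              + T1 fsd fsr / (T1 fsd fsr + grd) * gsd)
       \<and> is_max_on (\<lambda>a. min (mu1 fsd fsr gsd a) (mu_DBC fsd fsr frd grd gsd a)) {0..1}
           ((1 - T1 fsd fsr / (T1 fsd fsr + grd)) * (fsd + T1 fsd fsr)
              + T1 fsd fsr / (T1 fsd fsr + grd) * gsd)"
proof -
  define T where "T = T1 fsd fsr"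
  define a where "a = fsd + T"
  define b where "b = a - gsd"
  define d where "d = T + grd"
  define F where "F = frd"
  define G where "G = grd"
  define xs where "xs = T / d"
  define v where "v = a - b * xs"
  have T0: "T > 0" using assms(10) T_def by simp
  have d0: "d > 0" using T0 assms(8) d_def by simp
  have F0: "F > 0" using assms(8,9) F_def by simp
  have b0: "b > 0" using assms(7) T0 a_def b_def by simp
  have a0: "a > 0" using assms(1) T0 a_def by simp
  have xs0: "xs > 0" using T0 d0 xs_def by simp
  have xs1: "xs \<le> 1" using T0 d0 xs_def d_def assms(8) by simp
  have dxs: "d * xs = T" using d0 xs_def by simp
  have vdef: "(1 - T1 fsd fsr / (T1 fsd fsr + grd)) * (fsd + T1 fsd fsr)
              + T1 fsd fsr / (T1 fsd fsr + grd) * gsd = v"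
    unfolding v_def xs_def b_def a_def d_def T_def by (simp add: algebra_simps add_divide_distrib[symmetric] diff_divide_distrib[symmetric])
  have mu1e: "\<And>x. mu1 fsd fsr gsd x = a - b * x"
    unfolding mu1_def a_def b_def T_def by (simp add: algebra_simps)
  have sbce: "\<And>x. mu_SBC fsd fsr frd grd gsd x = F * (a - b*x) / ((T + F) - d * x)"
    unfolding mu_SBC_def mu1e F_def d_def T_def by (simp add: algebra_simps)
  have dbce: "\<And>x. mu_DBC fsd fsr frd grd gsd x = x * F * (a - b*x) / ((1 - x) * T + x * F - x * G)"
    unfolding mu_DBC_def mu1e F_def G_def T_def by (simp add: algebra_simps)
  have Tf: "T + fsd > 0" using T0 assms(1) by simp
  have C1: "b * (T + F) \<le> a * d"
  proof -
    have "frd - grd \<le> gsd * (T + frd) / (T + fsd)" using assms(11) T_def by simp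
    hence "(frd - grd) * (T + fsd) \<le> gsd * (T + frd)" using Tf by (simp add: le_divide_eq)
    thus ?thesis unfolding a_def b_def d_def F_def by (simp add: algebra_simps)
  qed
  have C2: "b * T * (T + G + F) \<le> a * d^2"
  proof -
    have bT: "b * T > 0" using b0 T0 by simp
    have "frd - grd \<le> d^2 * a / (T * b) - (T + 2 * grd)"
      using assms(11) unfolding T_def[symmetric] d_def a_def b_def by (simp add: algebra_simps)
    hence "frd - grd + (T + 2 * grd) \<le> d^2 * a / (T * b)" by simp
    hence "(frd - grd + (T + 2 * grd)) * (T * b) \<le> d^2 * a" using bT by (simp add: le_divide_eq mult.commute)
    thus ?thesis unfolding G_def F_def by (simp add: algebra_simps)
  qed
  have mxs: "mu1 fsd fsr gsd xs = v" unfolding mu1e v_def ..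
  have sxs: "mu_SBC fsd fsr frd grd gsd xs = v"
  proof -
    have "(T + F) - d * xs = F" using dxs by simp
    thus ?thesis unfolding sbce v_def using F0 by simp
  qed
  have dxs2: "mu_DBC fsd fsr frd grd gsd xs = v"
  proof -
    have "(1 - xs) * T + xs * F - xs * G = xs * F" using dxs unfolding d_def G_def by (simp add: algebra_simps)
    thus ?thesis unfolding dbce v_def using F0 xs0 by simp
  qed
  have upper: "\<And>x. x \<ge> xs \<Longrightarrow> mu1 fsd fsr gsd x \<le> v"
    unfolding mu1e v_def using b0 by (simp add: mult_left_mono)
  have sb: "\<And>x. 0 \<le> x \<Longrightarrow> x \<le> xs \<Longrightarrow> mu_SBC fsd fsr frd grd gsd x \<le> v"
  proof -
    fix x assume x0: "0 \<le> x" and xx: "x \<le> xs"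
    have dx: "d * x \<le> T" using dxs xx d0 by (metis mult_left_mono less_imp_le)
    have den: "(T + F) - d * x > 0" using dx F0 by simp
    have vd: "v * d = a * d - b * T" unfolding v_def using dxs by (simp add: algebra_simps)
    have id0: "d * (v * ((T + F) - d * x) - F * (a - b*x)) - (T - d*x) * (a*d - b*(T+F))
       = (v * d - (a * d - b * T)) * ((T + F) - d * x)" by (simp add: algebra_simps)
    have id: "d * (v * ((T + F) - d * x) - F * (a - b*x)) = (T - d*x) * (a*d - b*(T+F))"
      using id0 vd by simp
    have "(T - d*x) * (a*d - b*(T+F)) \<ge> 0" using dx C1 by simp
    hence "v * ((T + F) - d * x) - F * (a - b*x) \<ge> 0" using id d0
      by (metis zero_le_mult_iff not_le)
    thus "mu_SBC fsd fsr frd grd gsd x \<le> v" unfolding sbce using den by (simp add: divide_le_eq)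
  qed
  have db: "\<And>x. 0 \<le> x \<Longrightarrow> x \<le> xs \<Longrightarrow> mu_DBC fsd fsr frd grd gsd x \<le> v"
  proof -
    fix x assume x0: "0 \<le> x" and xx: "x \<le> xs"
    have x1: "x \<le> 1" using xx xs1 by simp
    have dx: "d * x \<le> T" using dxs xx d0 by (metis mult_left_mono less_imp_le)
    have FG: "F - G > 0" using assms(9) F_def G_def by simp
    have den: "(1 - x) * T + x * F - x * G > 0"
    proof (cases "x = 0")
      case True thus ?thesis using T0 by simp
    next
      case False
      hence "x * (F - G) > 0" using x0 FG by simp
      moreover have "(1 - x) * T \<ge> 0" using x1 T0 by simp
      ultimately show ?thesis by (simp add: algebra_simps)
    qed
    have vd: "v * d = a * d - b * T" unfolding v_def using dxs by (simp add: algebra_simps)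
    have id0: "d * (v * ((1 - x) * T + x * F - x * G) - x * F * (a - b*x))
              - (T - d*x) * (a*d - b*T - b*F*x) = (v * d - (a * d - b * T)) * ((1 - x) * T + x * F - x * G)"
      unfolding d_def G_def by (simp add: algebra_simps)
    have id: "d * (v * ((1 - x) * T + x * F - x * G) - x * F * (a - b*x))
              = (T - d*x) * (a*d - b*T - b*F*x)"
      using id0 vd by simp
    have q: "a*d - b*T - b*F*x \<ge> 0"
    proof -
      have "b*F*(d*x) \<le> b*F*T" using dx b0 F0 by simp
      hence "d*(b*F*x) \<le> b*F*T" by (simp add: algebra_simps)
      moreover have "b*F*T \<le> a*d*d - b*T*d" using C2 unfolding d_def G_def by (simp add: algebra_simps power2_eq_square)
      ultimately have "d * (a*d - b*T - b*F*x) \<ge> 0" by (simp add: algebra_simps)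
      thus ?thesis using d0 by (simp add: zero_le_mult_iff)
    qed
    have "(T - d*x) * (a*d - b*T - b*F*x) \<ge> 0" using dx q by simp
    hence "v * ((1 - x) * T + x * F - x * G) - x * F * (a - b*x) \<ge> 0" using id d0
      by (metis zero_le_mult_iff not_le)
    thus "mu_DBC fsd fsr frd grd gsd x \<le> v" unfolding dbce using den by (simp add: divide_le_eq)
  qed
  have xsin: "xs \<in> {0..1}" using xs0 xs1 by simp
  show ?thesis unfolding vdef is_max_on_def
  proof (intro conjI)
    show "\<exists>x\<in>{0..1}. min (mu1 fsd fsr gsd x) (mu_SBC fsd fsr frd grd gsd x) = v"
      using xsin mxs sxs by force
    show "\<exists>x\<in>{0..1}. min (mu1 fsd fsr gsd x) (mu_DBC fsd fsr frd grd gsd x) = v"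
      using xsin mxs dxs2 by force
    show "\<forall>x\<in>{0..1}. min (mu1 fsd fsr gsd x) (mu_SBC fsd fsr frd grd gsd x) \<le> v"
    proof
      fix x :: real assume "x \<in> {0..1}"
      thus "min (mu1 fsd fsr gsd x) (mu_SBC fsd fsr frd grd gsd x) \<le> v"
        using upper sb by (cases "x \<le> xs") (auto simp: min_le_iff_disj)
    qed
    show "\<forall>x\<in>{0..1}. min (mu1 fsd fsr gsd x) (mu_DBC fsd fsr frd grd gsd x) \<le> v"
    proof
      fix x :: real assume "x \<in> {0..1}"
      thus "min (mu1 fsd fsr gsd x) (mu_DBC fsd fsr frd grd gsd x) \<le> v"
        using upper db by (cases "x \<le> xs") (auto simp: min_le_iff_disj)
    qed
  qed
qed

end
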